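(* (Partial complement.) Let $V_1,V_2$ be disjoint finite vertex sets, $E\subseteq\{\{u,w\}:u\in V_1,w\in V_2\}$, and let $S_1\subseteq V_1$, $S_2\subseteq V_2$ be nonempty subsets. Let $s_1,s_2$ be two additional vertices and consider either of the graphs (a) on $V_1\cup V_2\cup\{s_1,s_2\}$ with edges $E\cup\{\{s_1,s_2\}\}\cup\{\{v,s_2\}:v\in S_1\}\cup\{\{w,s_1\}:w\in S_2\}$, or (b) on $V_1\cup V_2\cup\{s_1,s_2\}$ with edges $E\cup\{\{s_1,s_2\}\}\cup\{\{v,s_1\}:v\in S_1\}\cup\{\{w,s_2\}:w\in S_2\}$. Then the corresponding graph state can be transformed by LOCC (single-qubit Pauli measurements on $s_1$ and $s_2$ followed by outcome-dependent local unitary corrections on the remaining qubits) into the graph state of the graph on $V_1\cup V_2$ whose edge set is obtained from $E$ by complementing exactly the pairs in $S_1\times S_2$, namely $$\big(E\setminus\{\{u,w\}:u\in S_1,w\in S_2\}\big)\;\cup\;\{\{u,w\}:u\in S_1,\ w\in S_2,\ \{u,w\}\notin E\};$$ in particular every inter-link of $E$ incident to a vertex outside $S_1\cup S_2$ is retained unchanged.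
   Context: For a simple graph $G=(V,E)$, the graph state $|G\rangle$ is the $|V|$-qubit state $\prod_{\{a,b\}\in E} CZ_{ab}\,|+\rangle^{\otimes |V|}$, one qubit per vertex. Two QLANs are modeled by disjoint vertex sets $V_1,V_2$; inter-links are edges between $V_1$ and $V_2$. LOCC means local operations on individual qubits together with classical communication. *)

theory Defs
  imports Complex_Main
begin

text \<open>Computational basis states of the qubits indexed by a vertex set V:
  assignments x of a bit to each vertex, with x v = False outside V.
  A (pure, unnormalised) state of the qubits in V is a function from such
  assignments to complex amplitudes (zero outside basis_states V).
  Bit False = |0>, bit True = |1>.\<close>

definition basis_states :: "'a set \<Rightarrow> ('a \<Rightarrow> bool) set" where
  "basis_states V = {x. \<forall>v. v \<notin> V \<longrightarrow> \<not> x v}"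

text \<open>Graph state |G> = prod_{e in E} CZ_e |+>^{\<otimes> V}; edges are 2-element
  sets of vertices. Amplitude of |x> is (-1)^(number of edges with both ends 1)
  divided by sqrt(2^|V|).\<close>

definition graph_state :: "'a set \<Rightarrow> 'a set set \<Rightarrow> ('a \<Rightarrow> bool) \<Rightarrow> complex" where
  "graph_state V E x =
     (if x \<in> basis_states V
      then (-1) ^ card {e \<in> E. \<forall>v\<in>e. x v} / complex_of_real (sqrt (2 ^ card V))
      else 0)"

text \<open>Single-qubit Pauli observables and their eigenvectors.
  pauli_eigvec P m is the eigenvector of P with eigenvalue (-1)^m
  (m = False: outcome +1, m = True: outcome -1).\<close>

datatype pauli = PX | PY | PZ

definition pauli_mat :: "pauli \<Rightarrow> bool \<Rightarrow> bool \<Rightarrow> complex" where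
  "pauli_mat P i j = (case P of
      PX \<Rightarrow> (if i \<noteq> j then 1 else 0)
    | PY \<Rightarrow> (if i = j then 0 else if i then \<i> else - \<i>)
    | PZ \<Rightarrow> (if i = j then (if i then -1 else 1) else 0))"

definition pauli_eigvec :: "pauli \<Rightarrow> bool \<Rightarrow> bool \<Rightarrow> complex" where
  "pauli_eigvec P m b = (case P of
      PZ \<Rightarrow> (if b = m then 1 else 0)
    | PX \<Rightarrow> (if b \<and> m then -1 else 1) / complex_of_real (sqrt 2)
    | PY \<Rightarrow> (if b then (if m then - \<i> else \<i>) else 1) / complex_of_real (sqrt 2))"

text \<open>Projective measurement of qubit s with outcome vector phi, with the
  measured qubit discarded: the (unnormalised) post-measurement state
  (<phi|_s \<otimes> Id) |psi> of the remaining qubits.\<close>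

definition measure_qubit ::
  "'a \<Rightarrow> (bool \<Rightarrow> complex) \<Rightarrow> (('a \<Rightarrow> bool) \<Rightarrow> complex) \<Rightarrow> ('a \<Rightarrow> bool) \<Rightarrow> complex" where
  "measure_qubit s phi psi x =
     (if x s then 0 else (\<Sum>b\<in>UNIV. cnj (phi b) * psi (x(s := b))))"

text \<open>2x2 unitary matrices (U i j = <i|U|j>).\<close>

definition unitary2 :: "(bool \<Rightarrow> bool \<Rightarrow> complex) \<Rightarrow> bool" where
  "unitary2 U \<longleftrightarrow> (\<forall>i j. (\<Sum>k\<in>UNIV. cnj (U k i) * U k j) = (if i = j then 1 else 0))"

definition apply_local ::
  "'a set \<Rightarrow> ('a \<Rightarrow> bool \<Rightarrow> bool \<Rightarrow> complex) \<Rightarrow> (('a \<Rightarrow> bool) \<Rightarrow> complex) \<Rightarrow> ('a \<Rightarrow> bool) \<Rightarrow> complex" where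
  "apply_local W U psi y =
     (if y \<in> basis_states W
      then (\<Sum>x\<in>basis_states W. (\<Prod>v\<in>W. U v (y v) (x v)) * psi x)
      else 0)"

text \<open>LOCC transformation of the graph state (V,E) into the graph state
  (V - {s1,s2}, E'): single-qubit Pauli measurements on s1 and s2, followed by
  outcome-dependent local unitaries on the remaining qubits, such that for
  every outcome occurring with nonzero probability the resulting state equals
  the target graph state up to normalisation and global phase.\<close>

definition pauli_locc_transform ::
  "'a set \<Rightarrow> 'a set set \<Rightarrow> 'a \<Rightarrow> 'a \<Rightarrow> 'a set set \<Rightarrow> bool" where
  "pauli_locc_transform V E s1 s2 E' \<longleftrightarrow>
     (\<exists>P1 P2. \<forall>m1 m2.
        (let psi = measure_qubit s2 (pauli_eigvec P2 m2)
                     (measure_qubit s1 (pauli_eigvec P1 m1) (graph_state V E))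
         in (\<exists>x. psi x \<noteq> 0) \<longrightarrow>
            (\<exists>U c. (\<forall>v. unitary2 (U v)) \<and> c \<noteq> 0 \<and>
               apply_local (V - {s1, s2}) U psi
                 = (\<lambda>x. c * graph_state (V - {s1, s2}) E' x))))"

end

theory Submission
  imports Defs
begin


lemma count_G:
  assumes "A \<subseteq> V0" "B \<subseteq> V0" "E \<subseteq> Pow V0" "finite V0"
    "s1 \<noteq> s2" "s1 \<notin> V0" "s2 \<notin> V0"
  shows "card {e \<in> E \<union> {{s1, s2}} \<union> {{v, s2} | v. v \<in> A} \<union> {{w, s1} | w. w \<in> B}. \<forall>v\<in>e. x v}
    = card {e \<in> E. \<forall>v\<in>e. x v} + (if x s1 \<and> x s2 then 1 else 0)
      + (if x s2 then card {v \<in> A. x v} else 0) + (if x s1 then card {v \<in> B. x v} else 0)"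
proof -
  define SE where "SE = {e \<in> E. \<forall>v\<in>e. x v}"
  define S12 where "S12 = (if x s1 \<and> x s2 then {{s1,s2}} else ({}::'a set set))"
  define SA where "SA = (if x s2 then (\<lambda>v. {v,s2}) ` {v \<in> A. x v} else {})"
  define SB where "SB = (if x s1 then (\<lambda>v. {v,s1}) ` {v \<in> B. x v} else {})"
  have eq: "{e \<in> E \<union> {{s1, s2}} \<union> {{v, s2} | v. v \<in> A} \<union> {{w, s1} | w. w \<in> B}. \<forall>v\<in>e. x v}
      = SE \<union> S12 \<union> SA \<union> SB"
    unfolding SE_def S12_def SA_def SB_def by auto
  have finV: "finite (Pow V0)" using assms by simp
  have fE: "finite E" using assms(3) finV finite_subset by blast
  have fA: "finite A" "finite B" using assms finite_subset by blast+
  have fin: "finite SE" "finite S12" "finite SA" "finite SB"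
    unfolding SE_def S12_def SA_def SB_def using fE fA by auto
  have d1: "SE \<inter> S12 = {}" unfolding SE_def S12_def using assms by auto
  have d2: "(SE \<union> S12) \<inter> SA = {}" unfolding SE_def S12_def SA_def using assms by (auto simp: doubleton_eq_iff)
  have d3: "(SE \<union> S12 \<union> SA) \<inter> SB = {}" unfolding SE_def S12_def SA_def SB_def using assms by (auto simp: doubleton_eq_iff)
  have injA: "inj_on (\<lambda>v. {v,s2}) A" using assms by (auto simp: inj_on_def doubleton_eq_iff)
  have injB: "inj_on (\<lambda>v. {v,s1}) B" using assms by (auto simp: inj_on_def doubleton_eq_iff)
  have cA: "card SA = (if x s2 then card {v \<in> A. x v} else 0)"
    unfolding SA_def using card_image[OF inj_on_subset[OF injA]] by auto
  have cB: "card SB = (if x s1 then card {v \<in> B. x v} else 0)"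
    unfolding SB_def using card_image[OF inj_on_subset[OF injB]] by auto
  have c12: "card S12 = (if x s1 \<and> x s2 then 1 else 0)" unfolding S12_def by auto
  show ?thesis unfolding eq
    using card_Un_disjoint[OF _ _ d3] card_Un_disjoint[OF _ _ d2] card_Un_disjoint[OF _ _ d1] fin cA cB c12
    by (simp add: SE_def)
qed


lemma T:
  fixes p q :: nat and m1 m2 :: bool and X :: complex
  shows "X * ((if m2 then -1 else 1) * ((if m1 then -1 else 1) * (-1)^(1+p+q) + (-1)^p)
           + ((if m1 then -1 else 1) * (-1)^q + 1)) = X * (2 * (-1) ^ ((of_bool m1 + q) * (of_bool m2 + p)))"
proof -
  have e: "(-1::complex) ^ ((of_bool m1 + q) * (of_bool m2 + p)) = (if odd (of_bool m1 + q) \<and> odd (of_bool m2 + p) then -1 else 1)"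
    by (simp add: minus_one_power_iff)
  have p: "(-1::complex)^p = (if even p then 1 else -1)" "(-1::complex)^q = (if even q then 1 else -1)"
     "(-1::complex)^(1+p+q) = - ((-1)^p * (-1)^q)"
    by (simp_all add: minus_one_power_iff power_add)
  show ?thesis unfolding e p
    by (cases m1; cases m2; cases "even p"; cases "even q"; simp)
qed

lemma kk0: "sqrt 2 * sqrt 2 = (2::real)" by simp
lemma kk1: "complex_of_real (sqrt 2) * complex_of_real (sqrt 2) = 2"
  by (simp only: of_real_mult[symmetric] kk0) simp
lemma kk: "inverse (complex_of_real (sqrt 2)) * inverse (complex_of_real (sqrt 2)) = 1/2"
  by (simp only: inverse_mult_distrib[symmetric] kk1) simp


lemma sum_bool: "(\<Sum>b\<in>(UNIV::bool set). f b) = f True + f False"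
  by (simp add: UNIV_bool add.commute)

lemma cnj_eig: "cnj (pauli_eigvec PX m b) = (if b \<and> m then -1 else 1) * inverse (complex_of_real (sqrt 2))"
  by (simp add: pauli_eigvec_def divide_inverse)

lemma four_terms:
  fixes p q :: nat and m1 m2 :: bool
  shows "(\<Sum>b\<in>(UNIV::bool set). cnj (pauli_eigvec PX m2 b) *
          (\<Sum>a\<in>(UNIV::bool set). cnj (pauli_eigvec PX m1 a) *
             ((-1::complex) ^ (e + (if a \<and> b then 1 else 0) + (if b then p else 0) + (if a then q else 0)) / r)))
      = (-1) ^ (e + (of_bool m1 + q) * (of_bool m2 + p)) / r"
proof -
  define k where "k = inverse (complex_of_real (sqrt 2))"
  have kk': "k * k = 1/2" unfolding k_def by (rule kk)
  have L: "(\<Sum>b\<in>(UNIV::bool set). cnj (pauli_eigvec PX m2 b) *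
          (\<Sum>a\<in>(UNIV::bool set). cnj (pauli_eigvec PX m1 a) *
             ((-1::complex) ^ (e + (if a \<and> b then 1 else 0) + (if b then p else 0) + (if a then q else 0)) / r)))
     = (k * k) * ((-1)^e / r) * ((if m2 then -1 else 1) * ((if m1 then -1 else 1) * (-1)^(1+p+q) + (-1)^p)
           + ((if m1 then -1 else 1) * (-1)^q + 1))"
    unfolding sum_bool cnj_eig k_def[symmetric]
    by (cases m1; cases m2; simp add: power_add divide_inverse algebra_simps)
  have R: "(-1::complex) ^ (e + (of_bool m1 + q) * (of_bool m2 + p)) / r
     = (1/2) * ((-1)^e / r) * (2 * (-1) ^ ((of_bool m1 + q) * (of_bool m2 + p)))"
    by (simp add: power_add)
  show ?thesis unfolding L R kk' by (rule T)
qed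



lemma gs_upd:
  assumes "A \<subseteq> V0" "B \<subseteq> V0" "E \<subseteq> Pow V0" "finite V0"
    "s1 \<noteq> s2" "s1 \<notin> V0" "s2 \<notin> V0" "\<not> x s1" "\<not> x s2"
  shows "graph_state (V0 \<union> {s1, s2}) (E \<union> {{s1, s2}} \<union> {{v, s2} | v. v \<in> A} \<union> {{w, s1} | w. w \<in> B}) (x(s2 := b, s1 := a))
    = (if x \<in> basis_states V0 then (-1) ^ (card {e \<in> E. \<forall>v\<in>e. x v} + (if a \<and> b then 1 else 0)
      + (if b then card {v \<in> A. x v} else 0) + (if a then card {v \<in> B. x v} else 0))
       / complex_of_real (sqrt (2 ^ card (V0 \<union> {s1, s2}))) else 0)"
proof -
  let ?z = "x(s2 := b, s1 := a)"
  have mem: "?z \<in> basis_states (V0 \<union> {s1, s2}) \<longleftrightarrow> x \<in> basis_states V0"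
    using assms unfolding basis_states_def by auto
  have cE: "{e \<in> E. \<forall>v\<in>e. ?z v} = {e \<in> E. \<forall>v\<in>e. x v}"
  proof -
    have "\<And>e v. e \<in> E \<Longrightarrow> v \<in> e \<Longrightarrow> v \<noteq> s1 \<and> v \<noteq> s2" using assms by blast
    then show ?thesis by auto
  qed
  have cA: "{v \<in> A. ?z v} = {v \<in> A. x v}" using assms by auto
  have cB: "{v \<in> B. ?z v} = {v \<in> B. x v}" using assms by auto
  show ?thesis
    unfolding graph_state_def mem count_G[OF assms(1-7), of ?z] cE cA cB
    using assms(5) by simp
qed

lemma psi_formula:
  assumes "A \<subseteq> V0" "B \<subseteq> V0" "E \<subseteq> Pow V0" "finite V0"
    "s1 \<noteq> s2" "s1 \<notin> V0" "s2 \<notin> V0"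
  shows "measure_qubit s2 (pauli_eigvec PX m2) (measure_qubit s1 (pauli_eigvec PX m1)
      (graph_state (V0 \<union> {s1, s2}) (E \<union> {{s1, s2}} \<union> {{v, s2} | v. v \<in> A} \<union> {{w, s1} | w. w \<in> B}))) x
   = (if x \<in> basis_states V0 then (-1) ^ (card {e \<in> E. \<forall>v\<in>e. x v}
        + (of_bool m1 + card {v \<in> B. x v}) * (of_bool m2 + card {v \<in> A. x v}))
       / complex_of_real (sqrt (2 ^ card (V0 \<union> {s1, s2}))) else 0)"
proof (cases "x s1 \<or> x s2")
  case True
  then have "x \<notin> basis_states V0" using assms unfolding basis_states_def by auto
  then show ?thesis using True assms(5) unfolding measure_qubit_def by auto
next
  case False
  then have n1: "\<not> x s1" and n2: "\<not> x s2" by auto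
  have upd: "x(s2 := b, s1 := a) = (x(s2 := b))(s1 := a)" for a b by simp
  note G = gs_upd[OF assms n1 n2]
  show ?thesis
  proof (cases "x \<in> basis_states V0")
    case True
    let ?e = "card {e \<in> E. \<forall>v\<in>e. x v}" and ?p = "card {v \<in> A. x v}" and ?q = "card {v \<in> B. x v}"
      and ?r = "complex_of_real (sqrt (2 ^ card (V0 \<union> {s1, s2})))"
    have "measure_qubit s2 (pauli_eigvec PX m2) (measure_qubit s1 (pauli_eigvec PX m1)
      (graph_state (V0 \<union> {s1, s2}) (E \<union> {{s1, s2}} \<union> {{v, s2} | v. v \<in> A} \<union> {{w, s1} | w. w \<in> B}))) x
      = (\<Sum>b\<in>(UNIV::bool set). cnj (pauli_eigvec PX m2 b) *
          (\<Sum>a\<in>(UNIV::bool set). cnj (pauli_eigvec PX m1 a) *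
             ((-1::complex) ^ (?e + (if a \<and> b then 1 else 0) + (if b then ?p else 0) + (if a then ?q else 0)) / ?r)))"
      unfolding measure_qubit_def using n1 n2 assms(5) True
      by (simp add: G[simplified])
    also have "\<dots> = (-1) ^ (?e + (of_bool m1 + ?q) * (of_bool m2 + ?p)) / ?r"
      by (rule four_terms)
    finally show ?thesis using True by simp
  next
    case False
    show ?thesis unfolding measure_qubit_def using n1 n2 assms(5) False
      by (simp add: G[simplified])
  qed
qed


lemma finite_basis: "finite W \<Longrightarrow> finite (basis_states W)"
proof -
  assume f: "finite W"
  have "basis_states W \<subseteq> (\<lambda>S v. v \<in> S) ` Pow W"
  proof
    fix x assume "x \<in> basis_states W"
    then have "x = (\<lambda>v. v \<in> {v \<in> W. x v})" "{v \<in> W. x v} \<in> Pow W"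
      unfolding basis_states_def by auto
    then show "x \<in> (\<lambda>S v. v \<in> S) ` Pow W" by blast
  qed
  then show ?thesis using f finite_subset by blast
qed

lemma apply_local_diag:
  assumes "finite W" "\<And>v i j. i \<noteq> j \<Longrightarrow> U v i j = 0"
  shows "apply_local W U psi y = (if y \<in> basis_states W then (\<Prod>v\<in>W. U v (y v) (y v)) * psi y else 0)"
proof (cases "y \<in> basis_states W")
  case True
  have fb: "finite (basis_states W)" using finite_basis[OF assms(1)] .
  have z: "(\<Prod>v\<in>W. U v (y v) (x v)) * psi x = 0" if "x \<in> basis_states W - {y}" for x
  proof -
    from that True have "x \<noteq> y" "x \<in> basis_states W" by auto
    then obtain v where "x v \<noteq> y v" by auto
    moreover have "v \<in> W" using \<open>x v \<noteq> y v\<close> \<open>x \<in> basis_states W\<close> True unfolding basis_states_def by auto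
    ultimately have "\<exists>v\<in>W. U v (y v) (x v) = 0" using assms(2) by metis
    then show ?thesis using assms(1) by simp
  qed
  have z0: "(\<Sum>x\<in>basis_states W - {y}. (\<Prod>v\<in>W. U v (y v) (x v)) * psi x) = 0"
    using z by (intro sum.neutral) blast
  have "(\<Sum>x\<in>basis_states W. (\<Prod>v\<in>W. U v (y v) (x v)) * psi x)
       = (\<Prod>v\<in>W. U v (y v) (y v)) * psi y + (\<Sum>x\<in>basis_states W - {y}. (\<Prod>v\<in>W. U v (y v) (x v)) * psi x)"
    using sum.remove[OF fb True] by blast
  then have "(\<Sum>x\<in>basis_states W. (\<Prod>v\<in>W. U v (y v) (x v)) * psi x) = (\<Prod>v\<in>W. U v (y v) (y v)) * psi y"
    using z0 by simp
  then show ?thesis unfolding apply_local_def using True by simp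
next
  case False
  then show ?thesis unfolding apply_local_def by simp
qed

lemma prod_sign:
  assumes "finite W" "A \<subseteq> W"
  shows "(\<Prod>v\<in>W. (if y v \<and> v \<in> A \<and> m then -1 else (1::complex))) = (-1) ^ (if m then card {v \<in> A. y v} else 0)"
proof (cases m)
  case True
  have "(\<Prod>v\<in>W. (if y v \<and> v \<in> A then -1 else (1::complex))) = (\<Prod>v\<in>W \<inter> {v. y v \<and> v \<in> A}. -1) * (\<Prod>v\<in>W \<inter> - {v. y v \<and> v \<in> A}. 1)"
    by (rule prod.If_cases[OF assms(1)])
  moreover have "W \<inter> {v. y v \<and> v \<in> A} = {v \<in> A. y v}" using assms(2) by auto
  ultimately show ?thesis using True by simp
qed simp

lemma symdiff_parity:
  assumes "finite X" "finite Z"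
  shows "(-1::complex) ^ card ((X - Z) \<union> (Z - X)) = (-1) ^ card X * (-1) ^ card Z"
proof -
  have a: "card ((X - Z) \<union> (Z - X)) = card (X - Z) + card (Z - X)"
    using assms by (intro card_Un_disjoint) auto
  have b: "card X = card (X - Z) + card (X \<inter> Z)"
    using card_Int_Diff[OF assms(1), of Z] by simp
  have c: "card Z = card (Z - X) + card (X \<inter> Z)"
    using card_Int_Diff[OF assms(2), of X] by (simp add: Int_commute)
  have d: "(-1::complex) ^ card (X \<inter> Z) * (-1) ^ card (X \<inter> Z) = 1"
    by (simp add: power_add[symmetric])
  show ?thesis unfolding a b c power_add using d by (simp add: algebra_simps)
qed


lemma T2:
  fixes p q e :: nat and R :: complex
  shows "((-1)^(if m1 then p else 0) * (-1)^(if m2 then q else 0)) * ((-1)^(e + (of_bool m1 + q)*(of_bool m2+p)) / (2*R))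
     = (if m1 \<and> m2 then -1 else 1)/2 * ((-1)^e * (-1)^(p*q) / R)"
proof -
  have e: "(-1::complex) ^ ((of_bool m1 + q) * (of_bool m2 + p)) = (if odd (of_bool m1 + q) \<and> odd (of_bool m2 + p) then -1 else 1)"
    "(-1::complex) ^ (p*q) = (if odd p \<and> odd q then -1 else 1)"
    "(-1::complex)^(if m1 then p else 0) = (if m1 \<and> odd p then -1 else 1)"
    "(-1::complex)^(if m2 then q else 0) = (if m2 \<and> odd q then -1 else 1)"
    by (simp_all add: minus_one_power_iff)
  have k: "((-1::complex)^(if m1 then p else 0) * (-1)^(if m2 then q else 0)) * (-1)^((of_bool m1 + q)*(of_bool m2+p))
     = (if m1 \<and> m2 then -1 else 1) * (-1)^(p*q)"
    unfolding e by (cases m1; cases m2; cases "even p"; cases "even q"; simp)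
  have "((-1)^(if m1 then p else 0) * (-1)^(if m2 then q else 0)) * ((-1)^(e + (of_bool m1 + q)*(of_bool m2+p)) / (2*R))
     = (((-1::complex)^(if m1 then p else 0) * (-1)^(if m2 then q else 0)) * (-1)^((of_bool m1 + q)*(of_bool m2+p))) * ((-1)^e / (2*R))"
    by (simp add: power_add)
  also have "\<dots> = (if m1 \<and> m2 then -1 else 1)/2 * ((-1)^e * (-1)^(p*q) / R)"
    unfolding k by simp
  finally show ?thesis .
qed


lemma E'_parity:
  assumes "finite E" "finite A" "finite B" "A \<inter> B = {}"
  shows "(-1::complex) ^ card {e \<in> (E - {{u, w} | u w. u \<in> A \<and> w \<in> B}) \<union> {{u, w} | u w. u \<in> A \<and> w \<in> B \<and> {u, w} \<notin> E}. \<forall>v\<in>e. y v}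
    = (-1) ^ card {e \<in> E. \<forall>v\<in>e. y v} * (-1) ^ (card {v \<in> A. y v} * card {v \<in> B. y v})"
proof -
  define P where "P = {{u, w} | u w. u \<in> A \<and> w \<in> B}"
  define EY where "EY = {e \<in> E. \<forall>v\<in>e. y v}"
  define PY where "PY = {e \<in> P. \<forall>v\<in>e. y v}"
  have seq: "{e \<in> (E - {{u, w} | u w. u \<in> A \<and> w \<in> B}) \<union> {{u, w} | u w. u \<in> A \<and> w \<in> B \<and> {u, w} \<notin> E}. \<forall>v\<in>e. y v}
     = (EY - PY) \<union> (PY - EY)"
  proof -
    have "{{u, w} | u w. u \<in> A \<and> w \<in> B \<and> {u, w} \<notin> E} = P - E" unfolding P_def by blast
    then show ?thesis unfolding EY_def PY_def P_def by auto
  qed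
  have PYi: "PY = (\<lambda>(u, w). {u, w}) ` ({v \<in> A. y v} \<times> {v \<in> B. y v})"
    unfolding PY_def P_def by auto
  have inj: "inj_on (\<lambda>(u, w). {u, w}) ({v \<in> A. y v} \<times> {v \<in> B. y v})"
    using assms(4) by (auto simp: inj_on_def doubleton_eq_iff)
  have cPY: "card PY = card {v \<in> A. y v} * card {v \<in> B. y v}"
    unfolding PYi card_image[OF inj] card_cartesian_product ..
  have fPY: "finite PY" unfolding PYi using assms by simp
  have fEY: "finite EY" unfolding EY_def using assms by simp
  have "(-1::complex) ^ card {e \<in> (E - {{u, w} | u w. u \<in> A \<and> w \<in> B}) \<union> {{u, w} | u w. u \<in> A \<and> w \<in> B \<and> {u, w} \<notin> E}. \<forall>v\<in>e. y v}
      = (-1) ^ card EY * (-1) ^ card PY" unfolding seq by (rule symdiff_parity[OF fEY fPY])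
  then show ?thesis unfolding cPY EY_def .
qed

lemma main_gen:
  assumes "A \<subseteq> V0" "B \<subseteq> V0" "E \<subseteq> Pow V0" "finite V0"
    "s1 \<noteq> s2" "s1 \<notin> V0" "s2 \<notin> V0" "A \<inter> B = {}"
  shows "pauli_locc_transform (V0 \<union> {s1, s2})
     (E \<union> {{s1, s2}} \<union> {{v, s2} | v. v \<in> A} \<union> {{w, s1} | w. w \<in> B}) s1 s2
     ((E - {{u, w} | u w. u \<in> A \<and> w \<in> B}) \<union> {{u, w} | u w. u \<in> A \<and> w \<in> B \<and> {u, w} \<notin> E})"
  unfolding pauli_locc_transform_def Let_def
proof (intro exI[of _ PX] allI impI)
  fix m1 m2
  let ?G = "E \<union> {{s1, s2}} \<union> {{v, s2} | v. v \<in> A} \<union> {{w, s1} | w. w \<in> B}"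
  let ?E' = "(E - {{u, w} | u w. u \<in> A \<and> w \<in> B}) \<union> {{u, w} | u w. u \<in> A \<and> w \<in> B \<and> {u, w} \<notin> E}"
  let ?psi = "measure_qubit s2 (pauli_eigvec PX m2) (measure_qubit s1 (pauli_eigvec PX m1) (graph_state (V0 \<union> {s1, s2}) ?G))"
  define U where "U = (\<lambda>v i j. if i = j then (if i \<and> v \<in> A \<and> m1 then -1 else (1::complex)) * (if i \<and> v \<in> B \<and> m2 then -1 else 1) else 0)"
  define c where "c = (if m1 \<and> m2 then -1 else (1::complex)) / 2"
  have VV: "V0 \<union> {s1, s2} - {s1, s2} = V0" using assms by auto
  have uni: "\<forall>v. unitary2 (U v)"
    unfolding unitary2_def U_def sum_bool by (auto split: if_splits)
  have c0: "c \<noteq> 0" unfolding c_def by simp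
  have fE: "finite E" using assms(3,4) finite_subset by (metis finite_Pow_iff)
  have fA: "finite A" "finite B" using assms(1,2,4) finite_subset by blast+
  have cardV: "card (V0 \<union> {s1, s2}) = card V0 + 2" using assms by simp
  have sq: "complex_of_real (sqrt (2 ^ card (V0 \<union> {s1, s2}))) = 2 * complex_of_real (sqrt (2 ^ card V0))"
    unfolding cardV by (simp add: power_add real_sqrt_mult)
  have eq: "apply_local V0 U ?psi y = c * graph_state V0 ?E' y" for y
  proof (cases "y \<in> basis_states V0")
    case True
    have pr: "(\<Prod>v\<in>V0. U v (y v) (y v)) = (-1)^(if m1 then card {v \<in> A. y v} else 0) * (-1)^(if m2 then card {v \<in> B. y v} else 0)"
      unfolding U_def using prod_sign[OF assms(4) assms(1), of y m1] prod_sign[OF assms(4) assms(2), of y m2]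
      by (simp add: prod.distrib)
    have "apply_local V0 U ?psi y = (\<Prod>v\<in>V0. U v (y v) (y v)) * ?psi y"
      using apply_local_diag[OF assms(4), of U] True by (simp add: U_def)
    also have "\<dots> = c * graph_state V0 ?E' y"
      unfolding pr psi_formula[OF assms(1-7)] graph_state_def E'_parity[OF fE fA assms(8)] sq c_def
      using True by (simp only: if_True) (rule T2)
    finally show ?thesis .
  next
    case False
    then show ?thesis using apply_local_diag[OF assms(4), of U] unfolding graph_state_def by (simp add: U_def)
  qed
  show "\<exists>U c. (\<forall>v. unitary2 (U v)) \<and> c \<noteq> 0 \<and>
       apply_local (V0 \<union> {s1, s2} - {s1, s2}) U ?psi = (\<lambda>x. c * graph_state (V0 \<union> {s1, s2} - {s1, s2}) ?E' x)"
    unfolding VV using uni c0 eq by blast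
qed


theorem mainTheorem3:
  fixes V1 V2 S1 S2 :: "'a set" and E :: "'a set set" and s1 s2 :: 'a
  assumes "finite V1" and "finite V2" and "V1 \<inter> V2 = {}"
    and "E \<subseteq> {{u, w} | u w. u \<in> V1 \<and> w \<in> V2}"
    and "S1 \<subseteq> V1" and "S2 \<subseteq> V2" and "S1 \<noteq> {}" and "S2 \<noteq> {}"
    and "s1 \<noteq> s2" and "s1 \<notin> V1 \<union> V2" and "s2 \<notin> V1 \<union> V2"
  shows
    "pauli_locc_transform (V1 \<union> V2 \<union> {s1, s2})
       (E \<union> {{s1, s2}} \<union> {{v, s2} | v. v \<in> S1} \<union> {{w, s1} | w. w \<in> S2}) s1 s2
       ((E - {{u, w} | u w. u \<in> S1 \<and> w \<in> S2})
          \<union> {{u, w} | u w. u \<in> S1 \<and> w \<in> S2 \<and> {u, w} \<notin> E})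
   \<and> pauli_locc_transform (V1 \<union> V2 \<union> {s1, s2})
       (E \<union> {{s1, s2}} \<union> {{v, s1} | v. v \<in> S1} \<union> {{w, s2} | w. w \<in> S2}) s1 s2
       ((E - {{u, w} | u w. u \<in> S1 \<and> w \<in> S2})
          \<union> {{u, w} | u w. u \<in> S1 \<and> w \<in> S2 \<and> {u, w} \<notin> E})"
proof -
  let ?V0 = "V1 \<union> V2"
  have EP: "E \<subseteq> Pow ?V0" using assms(4) by auto
  have fin: "finite ?V0" using assms(1,2) by simp
  have d: "S1 \<inter> S2 = {}" using assms(3,5,6) by auto
  have d': "S2 \<inter> S1 = {}" using d by auto
  have s1: "s1 \<notin> ?V0" and s2: "s2 \<notin> ?V0" using assms(10,11) by auto
  have A1: "S1 \<subseteq> ?V0" and A2: "S2 \<subseteq> ?V0" using assms(5,6) by auto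
  note ga = main_gen[OF A1 A2 EP fin assms(9) s1 s2 d]
  note gb = main_gen[OF A2 A1 EP fin assms(9) s1 s2 d']
  have P: "{{u, w} | u w. u \<in> S2 \<and> w \<in> S1} = {{u, w} | u w. u \<in> S1 \<and> w \<in> S2}"
    by (auto simp: insert_commute)
  have P': "{{u, w} | u w. u \<in> S2 \<and> w \<in> S1 \<and> {u, w} \<notin> E} = {{u, w} | u w. u \<in> S1 \<and> w \<in> S2 \<and> {u, w} \<notin> E}"
    by (auto simp: insert_commute) (metis insert_commute)+
  have G: "E \<union> {{s1, s2}} \<union> {{v, s2} | v. v \<in> S2} \<union> {{w, s1} | w. w \<in> S1}
     = E \<union> {{s1, s2}} \<union> {{v, s1} | v. v \<in> S1} \<union> {{w, s2} | w. w \<in> S2}" by blast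
  show ?thesis using ga gb unfolding P P' G by simp
qed

end
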